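(* For $x\in\mathbb{C}^3$ the following are equivalent: (1) $x\in K_0$; (2) $x$ is a peak point of $\overline{\mathcal{P}}$; (3) $x$ belongs to the distinguished boundary $b\mathcal{P}$ of $\mathcal{P}$. Consequently $$b\mathcal{P}=\{(a,s,p)\in\mathbb{C}^3:(s,p)\in b\Gamma,\ |a|=\sqrt{1-\tfrac14|s|^2}\}=\{(a,s,p)\in\mathbb{C}^3: |s|\le2,\ |p|=1,\ s=\bar sp,\ |a|=\sqrt{1-\tfrac14|s|^2}\}.$$
   Context: $\mathbb{T}$ is the unit circle, $b\Gamma=\{(z_1+z_2,z_1z_2):z_1,z_2\in\mathbb{T}\}$, and $K_0=\{(a,s,p):(s,p)\in b\Gamma,\ |a|=\sqrt{1-\tfrac14|s|^2}\}$. $\mathbb{B}$ is the open unit ball of $\mathbb{C}^{2\times2}$ (operator norm), $\pi(A)=(a_{21},\operatorname{tr}A,\det A)$, $\mathcal{P}=\pi(\mathbb{B})$, $\overline{\mathcal{P}}$ its closure. $A(\mathcal{P})$ is the algebra of continuous functions on $\overline{\mathcal{P}}$ holomorphic on $\mathcal{P}$. A closed boundary is a closed subset $C\subset\overline{\mathcal{P}}$ on which every $f\in A(\mathcal{P})$ attains its maximum modulus; the distinguished (Shilov) boundary $b\mathcal{P}$ is the smallest closed boundary (which exists since $\overline{\mathcal{P}}$ is polynomially convex). A point $u\in\overline{\mathcal{P}}$ is a peak point if there is $g\in A(\mathcal{P})$ with $g(u)=1$ and $|g(x)|<1$ for all $x\in\overline{\mathcal{P}}\setminus\{u\}$. *)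

theory Defs
  imports "HOL-Analysis.Analysis"
begin

type_synonym c3 = "complex \<times> complex \<times> complex"

definition bGamma :: "(complex \<times> complex) set" where
  "bGamma = {(z1 + z2, z1 * z2) | z1 z2. cmod z1 = 1 \<and> cmod z2 = 1}"

definition K0 :: "c3 set" where
  "K0 = {(a, s, p). (s, p) \<in> bGamma \<and> cmod a = sqrt (1 - (cmod s)\<^sup>2 / 4)}"

definition mat_ball :: "(complex^2^2) set" where
  "mat_ball = {A. onorm (\<lambda>x. A *v x) < 1}"

definition piP :: "complex^2^2 \<Rightarrow> c3" where
  "piP A = (A $ 2 $ 1, A $ 1 $ 1 + A $ 2 $ 2, det A)"

definition Pent :: "c3 set" where
  "Pent = piP ` mat_ball"

definition c3_scale :: "complex \<Rightarrow> c3 \<Rightarrow> c3" where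
  "c3_scale c v = (c * fst v, c * fst (snd v), c * snd (snd v))"

text \<open>Holomorphic in several variables: complex Frechet differentiable, i.e. the
  (real) Frechet derivative exists and is complex linear.\<close>
definition holo3_on :: "(c3 \<Rightarrow> complex) \<Rightarrow> c3 set \<Rightarrow> bool" where
  "holo3_on f U \<longleftrightarrow> (\<forall>z\<in>U. \<exists>L. (f has_derivative L) (at z) \<and>
      (\<forall>c v. L (c3_scale c v) = c * L v))"

definition AP :: "(c3 \<Rightarrow> complex) set" where
  "AP = {f. continuous_on (closure Pent) f \<and> holo3_on f Pent}"

definition closed_boundary :: "c3 set \<Rightarrow> bool" where
  "closed_boundary C \<longleftrightarrow> closed C \<and> C \<subseteq> closure Pent \<and>
     (\<forall>f\<in>AP. \<exists>x\<in>C. \<forall>y\<in>closure Pent. cmod (f y) \<le> cmod (f x))"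

definition distinguished_boundary :: "c3 set" where
  "distinguished_boundary = (THE C. closed_boundary C \<and> (\<forall>C'. closed_boundary C' \<longrightarrow> C \<subseteq> C'))"

definition peak_point :: "c3 \<Rightarrow> bool" where
  "peak_point u \<longleftrightarrow> u \<in> closure Pent \<and>
     (\<exists>g\<in>AP. g u = 1 \<and> (\<forall>x\<in>closure Pent - {u}. cmod (g x) < 1))"

end

theory Submission
  imports Defs "HOL-Complex_Analysis.Complex_Analysis"
begin


lemma norm2: "(norm (x::'a::real_normed_vector^2))^2 = (norm (x$1))^2 + (norm (x$2))^2"
  by (simp add: norm_vec_def L2_set_def sum_2)

lemma mv2: fixes A :: "complex^2^2" shows
  "(A *v x) $ 1 = A$1$1 * x$1 + A$1$2 * x$2"
  "(A *v x) $ 2 = A$2$1 * x$1 + A$2$2 * x$2"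
  by (simp_all add: matrix_vector_mult_def sum_2)

definition contr :: "complex \<Rightarrow> complex \<Rightarrow> complex \<Rightarrow> complex \<Rightarrow> bool" where
  "contr a b c d \<longleftrightarrow> (\<forall>x y. (cmod (a*x+b*y))\<^sup>2 + (cmod (c*x+d*y))\<^sup>2 \<le> (cmod x)\<^sup>2 + (cmod y)\<^sup>2)"

definition CB :: "(complex^2^2) set" where
  "CB = {A. \<forall>x. norm (A *v x) \<le> norm x}"

lemma vec2_ex: "\<exists>v::complex^2. v$1 = x \<and> v$2 = y"
  by (rule exI[of _ "vector [x,y]"]) simp

lemma CB_iff: "A \<in> CB \<longleftrightarrow> contr (A$1$1) (A$1$2) (A$2$1) (A$2$2)"
proof
  assume A: "A \<in> CB"
  show "contr (A$1$1) (A$1$2) (A$2$1) (A$2$2)" unfolding contr_def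
  proof (intro allI)
    fix x y
    obtain v::"complex^2" where v: "v$1 = x" "v$2 = y" using vec2_ex by blast
    have "norm (A *v v) \<le> norm v" using A by (auto simp: CB_def)
    hence "(norm (A *v v))^2 \<le> (norm v)^2" by (rule power_mono) simp
    thus "(cmod (A$1$1*x+A$1$2*y))\<^sup>2 + (cmod (A$2$1*x+A$2$2*y))\<^sup>2 \<le> (cmod x)\<^sup>2 + (cmod y)\<^sup>2"
      by (simp add: norm2 mv2 v)
  qed
next
  assume c: "contr (A$1$1) (A$1$2) (A$2$1) (A$2$2)"
  show "A \<in> CB" unfolding CB_def
  proof (safe)
    fix v :: "complex^2"
    have "(norm (A *v v))^2 \<le> (norm v)^2" using c unfolding contr_def
      by (simp add: norm2 mv2)
    thus "norm (A *v v) \<le> norm v" by (rule power2_le_imp_le) simp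
  qed
qed

lemma cmod_sq: "(complex_of_real (cmod z))^2 = z * cnj z"
  by (metis complex_norm_square of_real_power)

lemma sq_le_self: "(N::real)^2 \<le> N \<Longrightarrow> N \<le> 1"
  by (cases "N \<le> 0") (auto simp: power2_eq_square)

lemma contr_col1: "contr a b c d \<Longrightarrow> (cmod a)^2 + (cmod c)^2 \<le> 1"
  unfolding contr_def by (erule allE[of _ 1], erule allE[of _ 0]) simp
lemma contr_col2: "contr a b c d \<Longrightarrow> (cmod b)^2 + (cmod d)^2 \<le> 1"
  unfolding contr_def by (erule allE[of _ 0], erule allE[of _ 1]) simp

lemma contr_row2: assumes "contr a b c d" shows "(cmod c)^2 + (cmod d)^2 \<le> 1"
proof -
  let ?N = "(cmod c)^2 + (cmod d)^2"
  have 1: "(cmod (a*cnj c+b*cnj d))\<^sup>2 + (cmod (c*cnj c+d*cnj d))\<^sup>2 \<le> (cmod (cnj c))\<^sup>2 + (cmod (cnj d))\<^sup>2"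
    using assms unfolding contr_def by blast
  have "c*cnj c+d*cnj d = complex_of_real ?N" by (simp add: cmod_sq)
  hence "cmod (c*cnj c+d*cnj d) = \<bar>?N\<bar>" by (simp only: norm_of_real)
  hence "cmod (c*cnj c+d*cnj d) = ?N" by simp
  with 1 have "(cmod (a*cnj c+b*cnj d))\<^sup>2 + ?N^2 \<le> ?N" by simp
  hence "?N^2 \<le> ?N" using zero_le_power2[of "cmod (a*cnj c+b*cnj d)"] by linarith
  thus ?thesis by (rule sq_le_self)
qed

lemma cs2: "(cmod (a*d + c*e))^2 \<le> ((cmod a)^2 + (cmod c)^2) * ((cmod d)^2 + (cmod e)^2)"
proof -
  have "complex_of_real (((cmod a)^2 + (cmod c)^2) * ((cmod d)^2 + (cmod e)^2) - (cmod (a*d + c*e))^2)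
      = complex_of_real ((cmod (a*cnj e - c*cnj d))^2)"
    unfolding of_real_mult of_real_add of_real_diff of_real_power cmod_sq
    by (simp add: algebra_simps)
  hence "((cmod a)^2 + (cmod c)^2) * ((cmod d)^2 + (cmod e)^2) - (cmod (a*d + c*e))^2 = (cmod (a*cnj e - c*cnj d))^2"
    using of_real_eq_iff by blast
  thus ?thesis by (smt (verit) zero_le_power2)
qed

lemma contr_det: assumes "contr a b c d" shows "cmod (a*d - b*c) \<le> 1"
proof -
  have "(cmod (a*d + c*(-b)))^2 \<le> ((cmod a)^2 + (cmod c)^2) * ((cmod d)^2 + (cmod (-b))^2)" by (rule cs2)
  also have "\<dots> \<le> 1 * 1" using contr_col1[OF assms] contr_col2[OF assms]
    by (intro mult_mono) (simp_all add: add.commute)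
  finally have "(cmod (a*d - b*c))^2 \<le> 1" by (simp add: algebra_simps)
  thus ?thesis by (simp add: power_le_one_iff abs_le_square_iff)
qed

lemma two_sq: "(cmod a + cmod d)^2 \<le> 2*((cmod a)^2 + (cmod d)^2)"
  by (simp add: power2_sum) (smt (verit) sum_squares_bound)

lemma contr_a_s: assumes "contr a b c d" shows "(cmod c)^2 + (cmod (a+d))^2/4 \<le> 1"
proof -
  have "(cmod (a+d))^2 \<le> (cmod a + cmod d)^2"
    by (rule power_mono) (simp_all add: norm_triangle_ineq)
  also have "\<dots> \<le> 2*((cmod a)^2 + (cmod d)^2)" by (rule two_sq)
  finally show ?thesis using contr_col1[OF assms] contr_row2[OF assms] by simp
qed

lemma piP_eq: "piP A = (A$2$1, A$1$1 + A$2$2, A$1$1*A$2$2 - A$1$2*A$2$1)"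
  by (simp add: piP_def det_2)

lemma CB_bounds: assumes "A \<in> CB" "piP A = (a,s,p)"
  shows "(cmod a)^2 + (cmod s)^2/4 \<le> 1" "cmod p \<le> 1" "cmod s \<le> 2" "cmod a \<le> 1"
proof -
  have c: "contr (A$1$1) (A$1$2) (A$2$1) (A$2$2)" using assms(1) CB_iff by blast
  show 1: "(cmod a)^2 + (cmod s)^2/4 \<le> 1" using contr_a_s[OF c] assms(2) by (simp add: piP_eq)
  have "p = A$1$1*A$2$2 - A$1$2*A$2$1" using assms(2) unfolding piP_eq by auto
  thus "cmod p \<le> 1" using contr_det[OF c] by simp
  have "(cmod s)^2 \<le> 4" using 1 zero_le_power2[of "cmod a"] by linarith
  hence "(cmod s)^2 \<le> 2^2" by simp
  thus "cmod s \<le> 2" by (rule power2_le_imp_le) simp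
  have "(cmod a)^2 \<le> 1" using 1 zero_le_power2[of "cmod s"] by linarith
  hence "(cmod a)^2 \<le> 1^2" by simp
  thus "cmod a \<le> 1" by (rule power2_le_imp_le) simp
qed

lemma mat_ball_CB: "mat_ball \<subseteq> CB"
proof
  fix A assume "A \<in> mat_ball"
  hence o: "onorm (\<lambda>x. A *v x) < 1" by (simp add: mat_ball_def)
  show "A \<in> CB" unfolding CB_def
  proof safe
    fix x :: "complex^2"
    have "norm (A *v x) \<le> onorm (\<lambda>x. A *v x) * norm x"
      by (rule onorm) simp
    also have "\<dots> \<le> 1 * norm x" by (rule mult_right_mono) (use o in auto)
    finally show "norm (A *v x) \<le> norm x" by simp
  qed
qed

definition scm :: "real \<Rightarrow> complex^2^2 \<Rightarrow> complex^2^2" where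
  "scm r A = (\<chi> i j. complex_of_real r * A$i$j)"

definition S3 :: "real \<Rightarrow> c3 \<Rightarrow> c3" where
  "S3 r x = (complex_of_real r * fst x, complex_of_real r * fst (snd x), complex_of_real (r^2) * snd (snd x))"

lemma piP_scm: "piP (scm r A) = S3 r (piP A)"
  by (simp add: piP_eq scm_def S3_def algebra_simps power2_eq_square)

lemma scm_ball: assumes "A \<in> CB" "0 \<le> r" "r < 1" shows "scm r A \<in> mat_ball"
proof -
  have "onorm (\<lambda>x. scm r A *v x) \<le> r"
  proof (rule onorm_le)
    fix x :: "complex^2"
    have "scm r A *v x = scaleR r (A *v x)"
      unfolding vec_eq_iff vector_scaleR_component
      by (simp add: scm_def matrix_vector_mult_def sum_distrib_left mult.assoc scaleR_conv_of_real)
    hence "norm (scm r A *v x) = r * norm (A *v x)"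
      using assms(2) by simp
    also have "\<dots> \<le> r * norm x" using assms(1,2) by (simp add: CB_def mult_left_mono)
    finally show "norm (scm r A *v x) \<le> r * norm x" .
  qed
  thus ?thesis using assms(3) by (simp add: mat_ball_def)
qed


lemma CB_closed: "closed CB"
proof -
  have "CB = (\<Inter>x. {A. norm (A *v x) - norm x \<le> 0})" by (auto simp: CB_def)
  moreover have "closed {A::complex^2^2. norm (A *v x) - norm x \<le> 0}" for x
  proof (rule closed_Collect_le)
    show "continuous_on UNIV (\<lambda>A::complex^2^2. norm (A *v x) - norm x)"
      unfolding matrix_vector_mult_def by (intro continuous_intros)
  qed simp
  ultimately show ?thesis by (metis (mono_tags, lifting) closed_INT)
qed

lemma CB_entry: "A \<in> CB \<Longrightarrow> cmod (A$i$j) \<le> 1"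
proof -
  assume "A \<in> CB"
  hence c: "contr (A$1$1) (A$1$2) (A$2$1) (A$2$2)" by (simp add: CB_iff)
  have 1: "(cmod (A$1$1))^2 \<le> 1" "(cmod (A$2$1))^2 \<le> 1" using contr_col1[OF c] by (smt (verit) zero_le_power2)+
  have 2: "(cmod (A$1$2))^2 \<le> 1" "(cmod (A$2$2))^2 \<le> 1" using contr_col2[OF c] by (smt (verit) zero_le_power2)+
  have "(cmod (A$i$j))^2 \<le> 1^2" using 1 2 using exhaust_2[of i] exhaust_2[of j] by auto
  thus ?thesis by (rule power2_le_imp_le) simp
qed

lemma CB_bounded: "bounded CB"
proof -
  have "norm A \<le> 2" if "A \<in> CB" for A
  proof -
    have r: "(norm (A$i))^2 \<le> 2" for i
    proof -
      have "(cmod (A$i$1))^2 \<le> 1" "(cmod (A$i$2))^2 \<le> 1"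
        using CB_entry[OF that] by (simp_all add: power_le_one)
      thus ?thesis by (simp add: norm2)
    qed
    have "(norm A)^2 \<le> 2^2" using r[of 1] r[of 2] by (simp add: norm2)
    thus ?thesis by (rule power2_le_imp_le) simp
  qed
  thus ?thesis unfolding bounded_iff by blast
qed

lemma CB_compact: "compact CB"
  using CB_closed CB_bounded by (simp add: compact_eq_bounded_closed)

lemma piP_cont: "continuous_on UNIV piP"
  unfolding piP_eq by (intro continuous_intros)

lemma Pent_sub: "Pent \<subseteq> piP ` CB"
  using mat_ball_CB by (auto simp: Pent_def)

lemma piP_CB_closure: "piP ` CB \<subseteq> closure Pent"
proof
  fix x assume "x \<in> piP ` CB"
  then obtain A where A: "A \<in> CB" "x = piP A" by auto
  define r where "r n = 1 - inverse (real (Suc n))" for n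
  have r0: "0 \<le> r n" "r n < 1" for n by (auto simp: r_def field_simps)
  have rl: "r \<longlonglongrightarrow> 1"
    unfolding r_def using tendsto_diff[OF tendsto_const LIMSEQ_inverse_real_of_nat] by simp
  have "(\<lambda>n. S3 (r n) x) \<longlonglongrightarrow> S3 1 x"
    unfolding S3_def by (intro tendsto_intros rl)
  moreover have "S3 1 x = x" by (simp add: S3_def)
  moreover have "S3 (r n) x \<in> Pent" for n
    using scm_ball[OF A(1) r0] piP_scm[of "r n" A] A(2) unfolding Pent_def by (metis image_eqI)
  ultimately show "x \<in> closure Pent" unfolding closure_sequential by metis
qed

lemma closure_Pent: "closure Pent = piP ` CB"
proof
  have "compact (piP ` CB)" using CB_compact piP_cont
    by (meson compact_continuous_image continuous_on_subset subset_UNIV)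
  hence "closed (piP ` CB)" by (rule compact_imp_closed)
  thus "closure Pent \<subseteq> piP ` CB" using Pent_sub by (rule closure_minimal[rotated])
qed (rule piP_CB_closure)

lemma compact_cl: "compact (closure Pent)"
  unfolding closure_Pent using CB_compact piP_cont
  by (meson compact_continuous_image continuous_on_subset subset_UNIV)

lemma cl_bounds: assumes "(a,s,p) \<in> closure Pent"
  shows "(cmod a)^2 + (cmod s)^2/4 \<le> 1" "cmod p \<le> 1" "cmod s \<le> 2" "cmod a \<le> 1"
  using assms CB_bounds unfolding closure_Pent by (smt (verit) image_iff)+

lemma S3_cl: assumes "x \<in> closure Pent" "0 \<le> r" "r < 1" shows "S3 r x \<in> Pent"
proof -
  obtain A where "A \<in> CB" "x = piP A" using assms(1) unfolding closure_Pent by auto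
  thus ?thesis using scm_ball[OF _ assms(2,3)] piP_scm unfolding Pent_def by (metis image_eqI)
qed


lemma cmod_ofr: "cmod (complex_of_real t * z) = \<bar>t\<bar> * cmod z"
  by (simp add: norm_mult)

lemma cl_norm_S3: assumes "y \<in> closure Pent" "0 \<le> r" "r \<le> 1"
  shows "dist (S3 r y) y \<le> 5 * (1 - r)"
proof -
  obtain a s p where y: "y = (a,s,p)" by (cases y) auto
  have b: "cmod a \<le> 1" "cmod s \<le> 2" "cmod p \<le> 1" using cl_bounds assms(1) y by auto
  have e: "S3 r y - y = (of_real (r-1) * a, of_real (r-1) * s, of_real (r^2-1) * p)"
    by (simp add: y S3_def algebra_simps)
  have "dist (S3 r y) y \<le> cmod (of_real (r-1) * a) + (cmod (of_real (r-1) * s) + cmod (of_real (r^2-1) * p))"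
    unfolding dist_norm e by (meson add_left_mono norm_Pair_le order_trans)
  also have "\<dots> = \<bar>r-1\<bar> * cmod a + (\<bar>r-1\<bar> * cmod s + \<bar>r^2-1\<bar> * cmod p)"
    by (simp only: cmod_ofr)
  also have "\<dots> = (1-r) * cmod a + ((1-r) * cmod s + (1-r^2) * cmod p)"
    using assms(2,3) power_le_one[of r 2] by (auto simp: abs_if)
  also have "\<dots> \<le> (1-r) * 1 + ((1-r) * 2 + (1-r^2) * 1)"
    using assms(2,3) b by (intro add_mono mult_left_mono) (auto simp: power_le_one)
  also have "\<dots> \<le> 5 * (1 - r)"
  proof -
    have "1 - r^2 = (1-r)*(1+r)" by (simp add: power2_eq_square algebra_simps)
    also have "\<dots> \<le> (1-r)*2" using assms(2,3) by (intro mult_left_mono) auto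
    finally show ?thesis by simp
  qed
  finally show ?thesis .
qed

lemma holo_comp:
  assumes f: "f \<in> AP" and inP: "S3 r (p1 z, p2 z, p3 z) \<in> Pent"
    and d1: "(p1 has_field_derivative d1) (at z)"
    and d2: "(p2 has_field_derivative d2) (at z)"
    and d3: "(p3 has_field_derivative d3) (at z)"
  shows "(\<lambda>w. f (S3 r (p1 w, p2 w, p3 w))) field_differentiable (at z)"
proof -
  obtain L where L: "(f has_derivative L) (at (S3 r (p1 z, p2 z, p3 z)))"
      "\<And>c v. L (c3_scale c v) = c * L v"
    using f inP unfolding AP_def holo3_on_def by blast
  define v where "v = (of_real r * d1, of_real r * d2, of_real (r^2) * d3)"
  have "((\<lambda>w. S3 r (p1 w, p2 w, p3 w)) has_derivative
          (\<lambda>h. (of_real r * d1 * h, of_real r * d2 * h, of_real (r^2) * d3 * h))) (at z)"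
    unfolding S3_def fst_conv snd_conv
    by (intro has_derivative_Pair; rule has_field_derivative_imp_has_derivative[unfolded has_field_derivative_def])
       (auto intro!: derivative_eq_intros d1[unfolded has_field_derivative_def] d2[unfolded has_field_derivative_def] d3[unfolded has_field_derivative_def])
  moreover have "(\<lambda>h. (of_real r * d1 * h, of_real r * d2 * h, of_real (r^2) * d3 * h)) = (\<lambda>h. c3_scale h v)"
    by (auto simp: c3_scale_def v_def)
  ultimately have hd: "((\<lambda>w. S3 r (p1 w, p2 w, p3 w)) has_derivative (\<lambda>h. c3_scale h v)) (at z)" by simp
  have "((f \<circ> (\<lambda>w. S3 r (p1 w, p2 w, p3 w))) has_derivative (L \<circ> (\<lambda>h. c3_scale h v))) (at z)"
    by (rule diff_chain_at[OF hd]) (use L(1) in simp)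
  moreover have "L \<circ> (\<lambda>h. c3_scale h v) = (*) (L v)"
    by (auto simp: L(2) mult.commute)
  ultimately have "((\<lambda>w. f (S3 r (p1 w, p2 w, p3 w))) has_field_derivative (L v)) (at z)"
    by (simp add: has_field_derivative_def comp_def)
  thus ?thesis by (auto simp: field_differentiable_def)
qed


lemma disc_bound:
  assumes f: "f \<in> AP"
    and cont: "continuous_on (cball 0 1) (\<lambda>z. (p1 z, p2 z, p3 z))"
    and img: "\<And>z. z \<in> cball 0 1 \<Longrightarrow> (p1 z, p2 z, p3 z) \<in> closure Pent"
    and h1: "p1 holomorphic_on ball 0 1" and h2: "p2 holomorphic_on ball 0 1"
    and h3: "p3 holomorphic_on ball 0 1"
    and B: "\<And>z. z \<in> sphere 0 1 \<Longrightarrow> cmod (f (p1 z, p2 z, p3 z)) \<le> B"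
    and z0: "z0 \<in> cball 0 1"
  shows "cmod (f (p1 z0, p2 z0, p3 z0)) \<le> B"
proof -
  have fc: "continuous_on (closure Pent) f" using f by (simp add: AP_def)
  have uc: "uniformly_continuous_on (closure Pent) f"
    by (rule compact_uniformly_continuous[OF fc compact_cl])
  show ?thesis
  proof (rule field_le_epsilon)
    fix e :: real assume e: "e > 0"
    obtain d where d: "d > 0" "\<And>x y. x \<in> closure Pent \<Longrightarrow> y \<in> closure Pent \<Longrightarrow> dist y x < d \<Longrightarrow> dist (f y) (f x) < e/2"
      using uc e unfolding uniformly_continuous_on_def by (meson half_gt_zero)
    define r where "r = max 0 (1 - d/10)"
    have r: "0 \<le> r" "r < 1" "5*(1-r) < d" using d(1) by (auto simp: r_def max_def)
    have close: "cmod (f (S3 r y)) \<le> cmod (f y) + e/2 \<and> cmod (f y) \<le> cmod (f (S3 r y)) + e/2"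
      if y: "y \<in> closure Pent" for y
    proof -
      have "S3 r y \<in> closure Pent" using S3_cl[OF y r(1,2)] closure_subset by blast
      moreover have "dist (S3 r y) y < d" using cl_norm_S3[OF y r(1)] r by linarith
      ultimately have "dist (f (S3 r y)) (f y) < e/2" using d(2)[OF y] by blast
      thus ?thesis unfolding dist_norm by (smt (verit) norm_minus_commute norm_triangle_ineq2)
    qed
    define g where "g w = f (S3 r (p1 w, p2 w, p3 w))" for w
    have hol: "g holomorphic_on ball 0 1"
      unfolding holomorphic_on_def
    proof
      fix z :: complex assume z: "z \<in> ball 0 1"
      obtain d1 where d1: "(p1 has_field_derivative d1) (at z)" using h1 z by (meson holomorphic_on_open open_ball)
      obtain d2 where d2: "(p2 has_field_derivative d2) (at z)" using h2 z by (meson holomorphic_on_open open_ball)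
      obtain d3 where d3: "(p3 has_field_derivative d3) (at z)" using h3 z by (meson holomorphic_on_open open_ball)
      have "S3 r (p1 z, p2 z, p3 z) \<in> Pent" using S3_cl[OF img r(1,2)] z by auto
      hence "g field_differentiable (at z)" unfolding g_def by (rule holo_comp[OF f _ d1 d2 d3])
      thus "g field_differentiable (at z within ball 0 1)" by (rule field_differentiable_at_within)
    qed
    have c1: "continuous_on (cball 0 1) p1" using continuous_on_fst[OF cont] by simp
    have c2: "continuous_on (cball 0 1) p2" using continuous_on_fst[OF continuous_on_snd[OF cont]] by simp
    have c3: "continuous_on (cball 0 1) p3" using continuous_on_snd[OF continuous_on_snd[OF cont]] by simp
    have cS: "continuous_on (cball 0 1) (\<lambda>w. S3 r (p1 w, p2 w, p3 w))"
      unfolding S3_def fst_conv snd_conv by (intro continuous_intros c1 c2 c3)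
    have gc: "continuous_on (cball 0 1) g"
      unfolding g_def
      by (rule continuous_on_compose2[OF fc cS]) (use S3_cl[OF img r(1,2)] closure_subset in blast)
    have "norm (g z0) \<le> B + e/2"
    proof (rule maximum_modulus_frontier[of g "cball 0 1"])
      show "g holomorphic_on interior (cball 0 1)" using hol by simp
      show "continuous_on (closure (cball 0 1)) g" using gc by simp
      show "bounded (cball (0::complex) 1)" by simp
      show "z0 \<in> cball 0 1" by (rule z0)
      fix z assume "z \<in> frontier (cball (0::complex) 1)"
      hence z: "z \<in> sphere 0 1" by simp
      hence "z \<in> cball 0 1" by auto
      hence "cmod (g z) \<le> cmod (f (p1 z, p2 z, p3 z)) + e/2" unfolding g_def using close img by blast
      thus "norm (g z) \<le> B + e/2" using B[OF z] by simp
    qed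
    moreover have "cmod (f (p1 z0, p2 z0, p3 z0)) \<le> cmod (g z0) + e/2"
      unfolding g_def using close img[OF z0] by blast
    ultimately show "cmod (f (p1 z0, p2 z0, p3 z0)) \<le> B + e" by simp
  qed
qed


lemma of_real_inj_eq: "complex_of_real a = complex_of_real b \<Longrightarrow> a = b" by simp

lemma L1: "(cmod (A*y1 - B*cnj y2))^2 + (cmod (A*y2 + B*cnj y1))^2
   = ((cmod A)^2+(cmod B)^2)*((cmod y1)^2+(cmod y2)^2)"
  apply (rule of_real_inj_eq)
  unfolding of_real_mult of_real_add of_real_power cmod_sq
  by (simp add: algebra_simps)

lemma L2: "(cmod (cnj x1*w1 + cnj x2*w2))^2 + (cmod (x1*w2 - x2*w1))^2
   = ((cmod x1)^2+(cmod x2)^2)*((cmod w1)^2+(cmod w2)^2)"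
  apply (rule of_real_inj_eq)
  unfolding of_real_mult of_real_add of_real_power cmod_sq
  by (simp add: algebra_simps)

definition mat2 :: "complex \<Rightarrow> complex \<Rightarrow> complex \<Rightarrow> complex \<Rightarrow> complex^2^2" where
  "mat2 a b c d = (\<chi> i j. if i = 1 then (if j = 1 then a else b) else (if j = 1 then c else d))"

lemma mat2_simps[simp]: "mat2 a b c d $ 1 $ 1 = a" "mat2 a b c d $ 1 $ 2 = b"
  "mat2 a b c d $ 2 $ 1 = c" "mat2 a b c d $ 2 $ 2 = d"
  by (simp_all add: mat2_def)

lemma mat2_eta: "(A::complex^2^2) = mat2 (A$1$1) (A$1$2) (A$2$1) (A$2$2)"
  unfolding vec_eq_iff forall_2 by simp

lemma piP_mat2: "piP (mat2 a b c d) = (c, a + d, a*d - b*c)"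
  by (simp add: piP_eq)

definition MM :: "complex \<Rightarrow> complex \<Rightarrow> complex \<Rightarrow> complex \<Rightarrow> complex \<Rightarrow> complex \<Rightarrow> complex^2^2" where
  "MM x1 x2 y1 y2 z1 z2 = mat2 (z1*y1*cnj x1 + z2*cnj y2*x2) (z1*y1*cnj x2 - z2*cnj y2*x1)
                               (z1*y2*cnj x1 - z2*cnj y1*x2) (z1*y2*cnj x2 + z2*cnj y1*x1)"

lemma MM_CB:
  assumes x: "(cmod x1)^2 + (cmod x2)^2 = 1" and y: "(cmod y1)^2 + (cmod y2)^2 = 1"
    and z: "cmod z1 \<le> 1" "cmod z2 \<le> 1"
  shows "MM x1 x2 y1 y2 z1 z2 \<in> CB"
  unfolding CB_iff MM_def mat2_simps contr_def
proof (intro allI)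
  fix w1 w2
  define c1 where "c1 = cnj x1*w1 + cnj x2*w2"
  define c2 where "c2 = x1*w2 - x2*w1"
  have e1: "(z1*y1*cnj x1 + z2*cnj y2*x2) * w1 + (z1*y1*cnj x2 - z2*cnj y2*x1) * w2
            = (z1*c1)*y1 - (z2*c2)*cnj y2"
    by (simp add: c1_def c2_def algebra_simps)
  have e2: "(z1*y2*cnj x1 - z2*cnj y1*x2) * w1 + (z1*y2*cnj x2 + z2*cnj y1*x1) * w2
            = (z1*c1)*y2 + (z2*c2)*cnj y1"
    by (simp add: c1_def c2_def algebra_simps)
  have "(cmod ((z1*c1)*y1 - (z2*c2)*cnj y2))^2 + (cmod ((z1*c1)*y2 + (z2*c2)*cnj y1))^2
        = (cmod (z1*c1))^2 + (cmod (z2*c2))^2"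
    using L1[of "z1*c1" y1 "z2*c2" y2] y by simp
  also have "\<dots> = (cmod z1)^2 * (cmod c1)^2 + (cmod z2)^2 * (cmod c2)^2"
    by (simp add: norm_mult power_mult_distrib)
  also have "\<dots> \<le> 1 * (cmod c1)^2 + 1 * (cmod c2)^2"
    using z by (intro add_mono mult_right_mono) (auto simp: power_le_one)
  also have "\<dots> = (cmod w1)^2 + (cmod w2)^2"
    using L2[of x1 w1 x2 w2] x by (simp add: c1_def c2_def)
  finally show "(cmod ((z1*y1*cnj x1 + z2*cnj y2*x2) * w1 + (z1*y1*cnj x2 - z2*cnj y2*x1) * w2))\<^sup>2 +
       (cmod ((z1*y2*cnj x1 - z2*cnj y1*x2) * w1 + (z1*y2*cnj x2 + z2*cnj y1*x1) * w2))\<^sup>2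
       \<le> (cmod w1)\<^sup>2 + (cmod w2)\<^sup>2" unfolding e1 e2 .
qed

lemma MM_piP: "piP (MM x1 x2 y1 y2 z1 z2) =
   (z1*y2*cnj x1 - z2*cnj y1*x2, z1 * (y1*cnj x1 + y2*cnj x2) + z2 * cnj (y1*cnj x1 + y2*cnj x2),
    z1*z2*(y1*cnj y1 + y2*cnj y2)*(x1*cnj x1 + x2*cnj x2))"
  unfolding MM_def piP_mat2 by (simp add: algebra_simps)


lemma unit_c: "(cmod x1)^2 + (cmod x2)^2 = 1 \<Longrightarrow> x1*cnj x1 + x2*cnj x2 = 1"
  by (metis cmod_sq of_real_1 of_real_add of_real_power)

lemma unimod_c: "cmod z = 1 \<Longrightarrow> z * cnj z = 1"
  by (metis cmod_sq of_real_1 one_power2)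

definition S1 :: "c3 set" where
  "S1 = {(w,s,p). cmod s \<le> 2 \<and> cmod p = 1 \<and> s = cnj s * p \<and> (cmod w)^2 + (cmod s)^2/4 \<le> 1}"

lemma MM_S1:
  assumes x: "(cmod x1)^2 + (cmod x2)^2 = 1" and y: "(cmod y1)^2 + (cmod y2)^2 = 1"
    and z: "cmod z1 = 1" "cmod z2 = 1"
  shows "piP (MM x1 x2 y1 y2 z1 z2) \<in> S1"
proof -
  obtain w s p where wsp: "piP (MM x1 x2 y1 y2 z1 z2) = (w,s,p)" by (metis prod_cases3)
  have CB: "MM x1 x2 y1 y2 z1 z2 \<in> CB" using MM_CB[OF x y] z by simp
  define c where "c = y1*cnj x1 + y2*cnj x2"
  have sp: "s = z1 * c + z2 * cnj c" "p = z1 * z2"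
    using wsp unfolding MM_piP c_def using unit_c[OF x] unit_c[OF y] by auto
  have "cnj s * p = (cnj z1 * z1) * (z2 * cnj c) + (cnj z2 * z2) * (z1 * c)"
    unfolding sp by (simp add: algebra_simps)
  also have "\<dots> = s" using unimod_c[OF z(1)] unimod_c[OF z(2)] sp by (simp add: mult.commute)
  finally have "s = cnj s * p" by simp
  moreover have "cmod p = 1" using sp z by (simp add: norm_mult)
  ultimately show ?thesis using CB_bounds[OF CB wsp] wsp by (simp add: S1_def)
qed

lemma quad_root: "(\<alpha>::complex) \<noteq> 0 \<Longrightarrow> \<exists>t. \<alpha>*t^2 + \<beta>*t + \<gamma> = 0"
proof -
  assume a: "\<alpha> \<noteq> 0"
  define r where "r = csqrt (\<beta>^2 - 4*\<alpha>*\<gamma>)"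
  have r2: "r^2 = \<beta>^2 - 4*\<alpha>*\<gamma>" by (simp add: r_def)
  define t where "t = (-\<beta> + r) / (2*\<alpha>)"
  have "4*\<alpha> * (\<alpha>*t^2 + \<beta>*t + \<gamma>) = (2*\<alpha>*t + \<beta>)^2 - (\<beta>^2 - 4*\<alpha>*\<gamma>)"
    by (simp add: power2_eq_square algebra_simps)
  also have "2*\<alpha>*t + \<beta> = r" using a by (simp add: t_def field_simps)
  finally have "4*\<alpha> * (\<alpha>*t^2 + \<beta>*t + \<gamma>) = 0" using r2 by simp
  thus ?thesis using a by auto
qed

lemma ortho_exists: "\<exists>x1 x2. (cmod x1)^2 + (cmod x2)^2 = 1 \<and> cnj h * x1^2 + k * x1 * x2 - h * x2^2 = 0"
proof (cases "h = 0")
  case True thus ?thesis by (intro exI[of _ 1] exI[of _ 0]) simp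
next
  case False
  then obtain t where t: "cnj h * t^2 + k * t + (- h) = 0" using quad_root[of "cnj h" k "-h"] by auto
  define n where "n = sqrt ((cmod t)^2 + 1)"
  have n: "n > 0" unfolding n_def by (intro real_sqrt_gt_zero add_nonneg_pos) auto
  have "(cmod (t / of_real n))^2 + (cmod (1 / of_real n))^2 = ((cmod t)^2 + 1) / n^2"
    using n by (simp add: norm_divide power_divide add_divide_distrib)
  also have "\<dots> = 1" using n by (simp add: n_def)
  finally have 1: "(cmod (t / of_real n))^2 + (cmod (1 / of_real n))^2 = 1" .
  have "cnj h * (t / of_real n)^2 + k * (t / of_real n) * (1 / of_real n) - h * (1 / of_real n)^2
        = (cnj h * t^2 + k * t + (- h)) / (of_real n)^2"
    using n by (simp add: field_simps power2_eq_square)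
  also have "\<dots> = 0" using t by simp
  finally show ?thesis using 1 by blast
qed


lemma mat2_eq_iff: "mat2 a b c d = mat2 a' b' c' d' \<longleftrightarrow> a = a' \<and> b = b' \<and> c = c' \<and> d = d'"
  by (metis mat2_simps)

lemma decomp_from_uv:
  assumes x: "(cmod x1)^2+(cmod x2)^2 = 1"
    and u1: "a*x1+b*x2 = s1*y1" and u2: "c*x1+d*x2 = s1*y2"
    and v1: "-a*cnj x2 + b*cnj x1 = -s2*cnj y2" and v2: "-c*cnj x2 + d*cnj x1 = s2*cnj y1"
  shows "mat2 a b c d = MM x1 x2 y1 y2 s1 s2"
proof -
  have X: "x1*cnj x1 + x2*cnj x2 = 1" by (rule unit_c[OF x])
  have "s1*y1*cnj x1 + s2*cnj y2*x2 = (a*x1+b*x2)*cnj x1 - (-a*cnj x2 + b*cnj x1)*x2"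
    unfolding u1 v1 by (simp add: algebra_simps)
  also have "\<dots> = a*(x1*cnj x1 + x2*cnj x2)" by (simp add: algebra_simps)
  finally have 1: "s1*y1*cnj x1 + s2*cnj y2*x2 = a" using X by simp
  have "s1*y1*cnj x2 - s2*cnj y2*x1 = (a*x1+b*x2)*cnj x2 + (-a*cnj x2 + b*cnj x1)*x1"
    unfolding u1 v1 by (simp add: algebra_simps)
  also have "\<dots> = b*(x1*cnj x1 + x2*cnj x2)" by (simp add: algebra_simps)
  finally have 2: "s1*y1*cnj x2 - s2*cnj y2*x1 = b" using X by simp
  have "s1*y2*cnj x1 - s2*cnj y1*x2 = (c*x1+d*x2)*cnj x1 - (-c*cnj x2 + d*cnj x1)*x2"
    unfolding u2 v2 by (simp add: algebra_simps)
  also have "\<dots> = c*(x1*cnj x1 + x2*cnj x2)" by (simp add: algebra_simps)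
  finally have 3: "s1*y2*cnj x1 - s2*cnj y1*x2 = c" using X by simp
  have "s1*y2*cnj x2 + s2*cnj y1*x1 = (c*x1+d*x2)*cnj x2 + (-c*cnj x2 + d*cnj x1)*x1"
    unfolding u2 v2 by (simp add: algebra_simps)
  also have "\<dots> = d*(x1*cnj x1 + x2*cnj x2)" by (simp add: algebra_simps)
  finally have 4: "s1*y2*cnj x2 + s2*cnj y1*x1 = d" using X by simp
  show ?thesis unfolding MM_def mat2_eq_iff using 1 2 3 4 by simp
qed

lemma svd_case1:
  assumes x: "(cmod x1)^2+(cmod x2)^2 = 1"
   and orth: "(a*x1+b*x2) * cnj (-a*cnj x2 + b*cnj x1) + (c*x1+d*x2) * cnj(-c*cnj x2 + d*cnj x1) = 0"
   and nz: "(cmod (a*x1+b*x2))^2 + (cmod (c*x1+d*x2))^2 > 0"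
  shows "\<exists>y1 y2 s1 s2. (cmod y1)^2+(cmod y2)^2 = 1 \<and> mat2 a b c d = MM x1 x2 y1 y2 s1 s2
     \<and> a*x1+b*x2 = s1*y1 \<and> c*x1+d*x2 = s1*y2
     \<and> -a*cnj x2 + b*cnj x1 = -s2*cnj y2 \<and> -c*cnj x2 + d*cnj x1 = s2*cnj y1"
proof -
  define u1 where "u1 = a*x1+b*x2"
  define u2 where "u2 = c*x1+d*x2"
  define v1 where "v1 = -a*cnj x2 + b*cnj x1"
  define v2 where "v2 = -c*cnj x2 + d*cnj x1"
  define N where "N = (cmod u1)^2 + (cmod u2)^2"
  define n where "n = sqrt N"
  have N: "N > 0" using nz by (simp add: N_def u1_def u2_def)
  have n: "n > 0" "n^2 = N" using N by (auto simp: n_def)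
  have nc: "complex_of_real n \<noteq> 0" using n by simp
  have Nc: "u1 * cnj u1 + u2 * cnj u2 = (complex_of_real n)^2"
    using n(2) unfolding N_def by (metis cmod_sq of_real_add of_real_power)
  define y1 where "y1 = u1 / of_real n"
  define y2 where "y2 = u2 / of_real n"
  define s2 where "s2 = -v1*y2 + v2*y1"
  have o2: "cnj u1 * v1 + cnj u2 * v2 = 0"
  proof -
    have "cnj (u1 * cnj v1 + u2 * cnj v2) = 0" using orth by (simp add: u1_def u2_def v1_def v2_def)
    thus ?thesis by (simp add: mult.commute)
  qed
  have "(cmod y1)^2+(cmod y2)^2 = ((cmod u1)^2 + (cmod u2)^2)/n^2"
    by (simp add: y1_def y2_def norm_divide power_divide add_divide_distrib)
  also have "\<dots> = N/N" using n(2) by (simp add: N_def)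
  also have "\<dots> = 1" using N by simp
  finally have yu: "(cmod y1)^2+(cmod y2)^2 = 1" .
  have e1: "u1 = of_real n * y1" "u2 = of_real n * y2" using nc by (simp_all add: y1_def y2_def)
  have e3: "v1 = -s2*cnj y2"
  proof -
    have "(complex_of_real n)^2 * (-s2*cnj y2) = (complex_of_real n)^2 * v1"
    proof -
      have "(complex_of_real n)^2 * (-s2*cnj y2) = v1*(u2*cnj u2) - v2*u1*cnj u2"
        using nc by (simp add: s2_def y1_def y2_def field_simps power2_eq_square)
      also have "\<dots> = v1*(u2*cnj u2) + u1 * v1 * cnj u1 - u1 * (cnj u1 * v1 + cnj u2 * v2)"
        by (simp add: algebra_simps)
      also have "\<dots> = v1 * (u1 * cnj u1 + u2 * cnj u2)" using o2 by (simp add: algebra_simps)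
      finally show ?thesis using Nc by (simp add: mult.commute)
    qed
    thus ?thesis using nc by (metis mult_left_cancel power_not_zero)
  qed
  have e4: "v2 = s2*cnj y1"
  proof -
    have "(complex_of_real n)^2 * (s2*cnj y1) = (complex_of_real n)^2 * v2"
    proof -
      have "(complex_of_real n)^2 * (s2*cnj y1) = -v1*u2*cnj u1 + v2*(u1*cnj u1)"
        using nc by (simp add: s2_def y1_def y2_def field_simps power2_eq_square)
      also have "\<dots> = v2*(u1*cnj u1) + u2 * v2 * cnj u2 - u2 * (cnj u1 * v1 + cnj u2 * v2)"
        by (simp add: algebra_simps)
      also have "\<dots> = v2 * (u1 * cnj u1 + u2 * cnj u2)" using o2 by (simp add: algebra_simps)
      finally show ?thesis using Nc by (simp add: mult.commute)
    qed
    thus ?thesis using nc by simp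
  qed
  have f: "a*x1+b*x2 = of_real n*y1" "c*x1+d*x2 = of_real n*y2"
     "-a*cnj x2 + b*cnj x1 = -s2*cnj y2" "-c*cnj x2 + d*cnj x1 = s2*cnj y1"
    using e1 e3 e4 by (simp_all add: u1_def u2_def v1_def v2_def)
  show ?thesis using yu decomp_from_uv[OF x f] f by blast
qed


lemma sq_le1: "(cmod s)^2 \<le> 1 \<Longrightarrow> cmod s \<le> 1"
  by (simp add: power_le_one_iff abs_le_square_iff)

lemma svd_bound:
  assumes c: "contr a b c d" and x: "(cmod x1)^2+(cmod x2)^2 = 1" and y: "(cmod y1)^2+(cmod y2)^2 = 1"
    and u1: "a*x1+b*x2 = s1*y1" and u2: "c*x1+d*x2 = s1*y2"
    and v1: "-a*cnj x2 + b*cnj x1 = -s2*cnj y2" and v2: "-c*cnj x2 + d*cnj x1 = s2*cnj y1"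
  shows "cmod s1 \<le> 1" "cmod s2 \<le> 1"
proof -
  have "(cmod (a*x1+b*x2))^2 + (cmod (c*x1+d*x2))^2 \<le> (cmod x1)^2 + (cmod x2)^2"
    using c unfolding contr_def by blast
  hence "(cmod s1)^2 * ((cmod y1)^2 + (cmod y2)^2) \<le> 1" unfolding u1 u2 using x
    by (simp add: norm_mult power_mult_distrib algebra_simps)
  thus "cmod s1 \<le> 1" using y by (intro sq_le1) simp
  have ineq: "(cmod (a*(-cnj x2)+b*cnj x1))^2 + (cmod (c*(-cnj x2)+d*cnj x1))^2 \<le> (cmod (-cnj x2))^2 + (cmod (cnj x1))^2"
    using c unfolding contr_def by blast
  have e1: "a*(-cnj x2)+b*cnj x1 = -s2*cnj y2" and e2: "c*(-cnj x2)+d*cnj x1 = s2*cnj y1"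
    using v1 v2 by simp_all
  have "(cmod (-s2*cnj y2))^2 + (cmod (s2*cnj y1))^2 \<le> 1"
    using ineq x unfolding e1 e2 by (simp add: add.commute)
  hence "(cmod s2)^2 * ((cmod y2)^2 + (cmod y1)^2) \<le> 1"
    by (simp only: norm_mult norm_minus_cancel complex_mod_cnj power_mult_distrib distrib_left)
  thus "cmod s2 \<le> 1" using y by (intro sq_le1) (simp add: add.commute)
qed

lemma orth_id: "(a*x1+b*x2) * cnj (-a*cnj x2 + b*cnj x1) + (c*x1+d*x2) * cnj(-c*cnj x2 + d*cnj x1)
  = cnj (cnj a * b + cnj c * d) * x1^2 + (b*cnj b + d*cnj d - a*cnj a - c*cnj c) * x1 * x2
    - (cnj a * b + cnj c * d) * x2^2"
  by (simp add: algebra_simps power2_eq_square)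

definition unit2 :: "complex \<Rightarrow> complex \<Rightarrow> bool" where
  "unit2 x1 x2 \<longleftrightarrow> (cmod x1)^2 + (cmod x2)^2 = 1"

lemma svd_mat2:
  assumes c: "contr a b c d"
  shows "\<exists>x1 x2 y1 y2 s1 s2. unit2 x1 x2 \<and> unit2 y1 y2 \<and> cmod s1 \<le> 1 \<and> cmod s2 \<le> 1
           \<and> mat2 a b c d = MM x1 x2 y1 y2 s1 s2"
proof -
  obtain x1 x2 where x: "(cmod x1)^2 + (cmod x2)^2 = 1"
    and q: "cnj (cnj a * b + cnj c * d) * x1^2 + (b*cnj b + d*cnj d - a*cnj a - c*cnj c) * x1 * x2
            - (cnj a * b + cnj c * d) * x2^2 = 0"
    using ortho_exists by blast
  have orth: "(a*x1+b*x2) * cnj (-a*cnj x2 + b*cnj x1) + (c*x1+d*x2) * cnj(-c*cnj x2 + d*cnj x1) = 0"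
    using q orth_id by simp
  show ?thesis
  proof (cases "(cmod (a*x1+b*x2))^2 + (cmod (c*x1+d*x2))^2 > 0")
    case True
    then obtain y1 y2 s1 s2 where y: "(cmod y1)^2+(cmod y2)^2 = 1" "mat2 a b c d = MM x1 x2 y1 y2 s1 s2"
      "a*x1+b*x2 = s1*y1" "c*x1+d*x2 = s1*y2"
      "-a*cnj x2 + b*cnj x1 = -s2*cnj y2" "-c*cnj x2 + d*cnj x1 = s2*cnj y1"
      using svd_case1[OF x orth] by blast
    show ?thesis using svd_bound[OF c x y(1) y(3-6)] x y unfolding unit2_def by blast
  next
    case False
    hence u0: "a*x1+b*x2 = 0" "c*x1+d*x2 = 0"
      by (smt (verit) zero_le_power2 zero_less_norm_iff power_eq_0_iff)+
    let ?x1 = "-cnj x2" and ?x2 = "cnj x1"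
    have x': "(cmod ?x1)^2 + (cmod ?x2)^2 = 1" using x by (simp add: add.commute)
    show ?thesis
    proof (cases "(cmod (a*?x1+b*?x2))^2 + (cmod (c*?x1+d*?x2))^2 > 0")
      case True
      have orth': "(a*?x1+b*?x2) * cnj (-a*cnj ?x2 + b*cnj ?x1) + (c*?x1+d*?x2) * cnj(-c*cnj ?x2 + d*cnj ?x1) = 0"
      proof -
        have "-a*cnj ?x2 + b*cnj ?x1 = -(a*x1+b*x2)" "-c*cnj ?x2 + d*cnj ?x1 = -(c*x1+d*x2)" by simp_all
        thus ?thesis using u0 by simp
      qed
      then obtain y1 y2 s1 s2 where y: "(cmod y1)^2+(cmod y2)^2 = 1" "mat2 a b c d = MM ?x1 ?x2 y1 y2 s1 s2"
        "a*?x1+b*?x2 = s1*y1" "c*?x1+d*?x2 = s1*y2"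
        "-a*cnj ?x2 + b*cnj ?x1 = -s2*cnj y2" "-c*cnj ?x2 + d*cnj ?x1 = s2*cnj y1"
        using svd_case1[OF x' orth' True] by blast
      show ?thesis using svd_bound[OF c x' y(1) y(3-6)] x' y unfolding unit2_def by blast
    next
      case False
      hence v0: "a*?x1+b*?x2 = 0" "c*?x1+d*?x2 = 0"
        by (smt (verit) zero_le_power2 zero_less_norm_iff power_eq_0_iff)+
      have "mat2 a b c d = MM x1 x2 1 0 0 0"
        by (rule decomp_from_uv[OF x]) (use u0 v0 in \<open>simp_all add: algebra_simps\<close>)
      thus ?thesis using x unfolding unit2_def by (intro exI[of _ x1] exI[of _ x2] exI[of _ 1] exI[of _ 0]) auto
    qed
  qed
qed

lemma svd: assumes "A \<in> CB"
  shows "\<exists>x1 x2 y1 y2 s1 s2. unit2 x1 x2 \<and> unit2 y1 y2 \<and> cmod s1 \<le> 1 \<and> cmod s2 \<le> 1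
           \<and> A = MM x1 x2 y1 y2 s1 s2"
  using svd_mat2[of "A$1$1" "A$1$2" "A$2$1" "A$2$2"] assms mat2_eta[of A] unfolding CB_iff by simp


lemma bG_fwd: assumes "cmod z1 = 1" "cmod z2 = 1"
  shows "cmod (z1+z2) \<le> 2" "cmod (z1*z2) = 1" "z1+z2 = cnj (z1+z2) * (z1*z2)"
proof -
  show "cmod (z1+z2) \<le> 2" using norm_triangle_ineq[of z1 z2] assms by simp
  show "cmod (z1*z2) = 1" using assms by (simp add: norm_mult)
  have "cnj (z1+z2) * (z1*z2) = (z1 * cnj z1) * z2 + (z2 * cnj z2) * z1" by (simp add: algebra_simps)
  thus "z1+z2 = cnj (z1+z2) * (z1*z2)" using unimod_c[OF assms(1)] unimod_c[OF assms(2)] by simp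
qed

lemma amgm_strict: assumes "(r::real) > 0" "r \<noteq> 1" shows "r + 1/r > 2"
proof -
  have "(r - 1)^2 > 0" using assms by simp
  hence "r^2 + 1 > 2*r" by (simp add: power2_eq_square algebra_simps)
  thus ?thesis using assms by (simp add: field_simps power2_eq_square)
qed

lemma bG_bwd: assumes s: "cmod s \<le> 2" and p: "cmod p = 1" and e: "s = cnj s * p"
  shows "\<exists>z1 z2. cmod z1 = 1 \<and> cmod z2 = 1 \<and> s = z1 + z2 \<and> p = z1 * z2"
proof -
  obtain z1 where r: "1 * z1^2 + (-s) * z1 + p = 0" using quad_root[of 1 "-s" p] by auto
  define z2 where "z2 = s - z1"
  have sp: "s = z1 + z2" "p = z1 * z2" using r by (auto simp: z2_def power2_eq_square algebra_simps)
  have pz: "p \<noteq> 0" using p by auto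
  hence z10: "z1 \<noteq> 0" "z2 \<noteq> 0" using sp by auto
  have P: "p * cnj p = 1" by (rule unimod_c[OF p])
  have z1u: "cmod z1 = 1"
  proof (rule ccontr)
    assume ne: "cmod z1 \<noteq> 1"
    define w where "w = 1 / cnj z1"
    have wr: "w^2 - s*w + p = 0"
    proof -
      have "cnj (1 - s * cnj z1 + p * (cnj z1)^2) * p = p - (cnj s * p) * z1 + (p * cnj p) * z1^2"
        by (simp add: algebra_simps)
      also have "\<dots> = z1^2 - s * z1 + p" using P e by simp
      also have "\<dots> = 0" using r by (simp add: algebra_simps)
      finally have "1 - s * cnj z1 + p * (cnj z1)^2 = 0" using pz
        by (metis complex_cnj_zero_iff mult_eq_0_iff)
      hence "(1 - s * cnj z1 + p * (cnj z1)^2) / (cnj z1)^2 = 0" by simp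
      thus ?thesis using z10 by (simp add: w_def field_simps power2_eq_square)
    qed
    have "(w - z1) * (w - z2) = w^2 - s*w + p" using sp by (simp add: algebra_simps power2_eq_square)
    hence "w = z1 \<or> w = z2" using wr by simp
    moreover have "w \<noteq> z1"
    proof
      assume "w = z1"
      hence "cmod w = cmod z1" by simp
      moreover have "cmod w = 1 / cmod z1" by (simp add: w_def norm_divide)
      ultimately have "cmod z1 = 1 / cmod z1" by simp
      hence "(cmod z1)^2 = 1" using z10 by (simp add: field_simps power2_eq_square)
      thus False using ne norm_ge_zero[of z1] by (simp add: power2_eq_1_iff)
    qed
    ultimately have wz: "z2 = 1 / cnj z1" by (simp add: w_def)
    define r where "r = cmod z1"
    have r0: "r > 0" using z10 by (simp add: r_def)
    have "z1 * cnj z1 = (complex_of_real r)^2" by (simp add: r_def cmod_sq)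
    hence "1 / cnj z1 = z1 / (complex_of_real r)^2" using z10
      by (metis (no_types, lifting) complex_cnj_zero_iff div_by_1 divide_divide_eq_right mult.commute nonzero_mult_div_cancel_left)
    hence "s = z1 * complex_of_real (1 + 1 / r^2)" unfolding sp wz
      by (simp add: field_simps)
    hence "cmod s = r * (1 + 1 / r^2)"
      using r0 by (simp only: norm_mult norm_of_real r_def[symmetric]) simp
    also have "\<dots> = r + 1 / r" using r0 by (simp add: field_simps power2_eq_square)
    also have "\<dots> > 2" using amgm_strict[of r] r0 ne by (simp add: r_def)
    finally show False using s by simp
  qed
  moreover have "cmod z2 = 1" using p sp z1u by (simp add: norm_mult)
  ultimately show ?thesis using sp by blast
qed

lemma bG_char: "(s,p) \<in> bGamma \<longleftrightarrow> cmod s \<le> 2 \<and> cmod p = 1 \<and> s = cnj s * p"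
proof
  assume "(s,p) \<in> bGamma"
  then obtain z1 z2 where "s = z1+z2" "p = z1*z2" "cmod z1 = 1" "cmod z2 = 1" by (auto simp: bGamma_def)
  thus "cmod s \<le> 2 \<and> cmod p = 1 \<and> s = cnj s * p" using bG_fwd by blast
next
  assume "cmod s \<le> 2 \<and> cmod p = 1 \<and> s = cnj s * p"
  thus "(s,p) \<in> bGamma" using bG_bwd unfolding bGamma_def by blast
qed

lemma parallelogram_u: assumes "cmod z1 = 1" "cmod z2 = 1"
  shows "1 - (cmod (z1+z2))^2/4 = ((cmod (z1-z2))/2)^2"
proof -
  have "complex_of_real ((cmod (z1+z2))^2 + (cmod (z1-z2))^2) = 2*(z1*cnj z1 + z2*cnj z2)"
    unfolding of_real_add of_real_power cmod_sq by (simp add: algebra_simps)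
  also have "\<dots> = 4" using unimod_c[OF assms(1)] unimod_c[OF assms(2)] by simp
  finally have "(cmod (z1+z2))^2 + (cmod (z1-z2))^2 = 4"
    by (metis of_real_eq_iff of_real_numeral)
  thus ?thesis by (simp add: power_divide)
qed


lemma qx: assumes "cmod q \<le> 1/2" shows "\<exists>x1 x2. unit2 x1 x2 \<and> cnj x1 * x2 = q"
proof -
  define D where "D = sqrt (1 - 4*(cmod q)^2)"
  have q2: "4*(cmod q)^2 \<le> 1"
  proof -
    have "(cmod q)^2 \<le> (1/2)^2" using assms by (intro power_mono) auto
    thus ?thesis by (simp add: power_divide)
  qed
  have D: "0 \<le> D" "D^2 = 1 - 4*(cmod q)^2" using q2 by (auto simp: D_def)
  define t where "t = sqrt ((1 + D)/2)"
  have t: "t > 0" "t^2 = (1+D)/2" using D by (auto simp: t_def)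
  have key: "t^2 + (cmod q)^2 / t^2 = 1"
  proof -
    have a1: "(1+D)^2 = 1 + 2*D + D^2" by (simp add: power2_sum)
    have a2: "(1+D)^2 + 4*(cmod q)^2 = 2 + 2*D" using a1 D(2) by linarith
    have "t^2 * t^2 = (1+D)^2/4" unfolding t(2) by (simp add: power2_eq_square)
    hence "t^2 * t^2 + (cmod q)^2 = ((1+D)^2 + 4*(cmod q)^2)/4" by simp
    also have "\<dots> = t^2" unfolding a2 t(2) by simp
    finally have "t^2 * t^2 + (cmod q)^2 = t^2" .
    thus ?thesis using t(1) by (simp add: field_simps power2_eq_square)
  qed
  have "unit2 (complex_of_real t) (q / complex_of_real t)"
    unfolding unit2_def using t(1) key by (simp add: norm_divide power_divide)
  moreover have "cnj (complex_of_real t) * (q / complex_of_real t) = q" using t(1) by simp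
  ultimately show ?thesis by blast
qed

lemma fiber_cl:
  assumes z: "cmod z1 = 1" "cmod z2 = 1" and w: "cmod w \<le> cmod (z1 - z2) / 2"
  shows "(w, z1+z2, z1*z2) \<in> closure Pent"
proof -
  define q where "q = (if z1 = z2 then 0 else w / (z1 - z2))"
  have qb: "cmod q \<le> 1/2" using w by (auto simp: q_def norm_divide divide_le_eq)
  have wq: "w = (z1 - z2) * q" using w by (auto simp: q_def)
  obtain x1 x2 where x: "unit2 x1 x2" "cnj x1 * x2 = q" using qx[OF qb] by blast
  have X: "x1*cnj x1 + x2*cnj x2 = 1" using x(1) unit_c unfolding unit2_def by blast
  have CB: "MM x1 x2 x1 x2 z1 z2 \<in> CB" using MM_CB x(1) z unfolding unit2_def by simp
  have "piP (MM x1 x2 x1 x2 z1 z2) = (z1*x2*cnj x1 - z2*cnj x1*x2, z1 * 1 + z2 * cnj 1, z1*z2*1*1)"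
    unfolding MM_piP X by simp
  also have "z1*x2*cnj x1 - z2*cnj x1*x2 = (z1 - z2)*(cnj x1*x2)" by (simp add: algebra_simps)
  also have "(z1 - z2)*(cnj x1*x2) = w" using x(2) wq by simp
  finally have "piP (MM x1 x2 x1 x2 z1 z2) = (w, z1+z2, z1*z2)" by simp
  thus ?thesis using CB unfolding closure_Pent by (metis image_eqI)
qed

lemma K0_cl: "K0 \<subseteq> closure Pent"
proof
  fix k assume "k \<in> K0"
  then obtain a s p where k: "k = (a,s,p)" "(s,p) \<in> bGamma" "cmod a = sqrt (1 - (cmod s)^2/4)"
    by (auto simp: K0_def)
  then obtain z1 z2 where z: "cmod z1 = 1" "cmod z2 = 1" "s = z1+z2" "p = z1*z2"
    by (auto simp: bGamma_def)
  have "cmod a = cmod (z1 - z2) / 2" using k(3) parallelogram_u[OF z(1,2)] z(3) by simp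
  thus "k \<in> closure Pent" using fiber_cl[OF z(1,2)] k(1) z(3,4) by simp
qed

lemma S1_bound:
  assumes f: "f \<in> AP" and B: "\<And>k. k \<in> K0 \<Longrightarrow> cmod (f k) \<le> B" and q: "(w,s,p) \<in> S1"
  shows "cmod (f (w,s,p)) \<le> B"
proof -
  have sp: "cmod s \<le> 2" "cmod p = 1" "s = cnj s * p" "(cmod w)^2 + (cmod s)^2/4 \<le> 1"
    using q by (auto simp: S1_def)
  obtain z1 z2 where z: "cmod z1 = 1" "cmod z2 = 1" "s = z1 + z2" "p = z1 * z2"
    using bG_bwd[OF sp(1-3)] by blast
  have bg: "(s,p) \<in> bGamma" using bG_char sp by blast
  define R where "R = cmod (z1 - z2) / 2"
  have R0: "R \<ge> 0" by (simp add: R_def)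
  have Rs: "sqrt (1 - (cmod s)^2/4) = R" using parallelogram_u[OF z(1,2)] z(3) R0 by (simp add: R_def)
  have "(cmod w)^2 \<le> 1 - (cmod s)^2/4" using sp(4) by linarith
  also have "\<dots> = R^2" using parallelogram_u[OF z(1,2)] z(3) by (simp add: R_def)
  finally have "(cmod w)^2 \<le> R^2" .
  hence wR: "cmod w \<le> R" using R0 by (rule power2_le_imp_le)
  show ?thesis
  proof (cases "R = 0")
    case True
    hence "w = 0" using wR by simp
    hence "(w,s,p) \<in> K0" using bg Rs True by (simp add: K0_def)
    thus ?thesis by (rule B)
  next
    case False
    hence Rp: "R > 0" using R0 by simp
    have "cmod (f (complex_of_real R * (w / of_real R), (\<lambda>_. s) (w / of_real R), (\<lambda>_. p) (w / of_real R))) \<le> B"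
    proof (rule disc_bound[OF f, of "\<lambda>z. complex_of_real R * z" "\<lambda>_. s" "\<lambda>_. p" B "w / of_real R"])
      show "continuous_on (cball 0 1) (\<lambda>z. (complex_of_real R * z, (\<lambda>_. s) z, (\<lambda>_. p) z))"
        by (intro continuous_intros)
      show "(\<lambda>z. complex_of_real R * z) holomorphic_on ball 0 1" by (intro holomorphic_intros)
      show "(\<lambda>_. s) holomorphic_on ball 0 1" "(\<lambda>_. p) holomorphic_on ball 0 1" by (intro holomorphic_intros)+
      show "w / of_real R \<in> cball 0 1" using wR Rp by (simp add: norm_divide divide_le_eq)
    next
      fix z :: complex assume "z \<in> cball 0 1"
      hence "cmod (complex_of_real R * z) \<le> cmod (z1 - z2) / 2"
        using R0 by (simp add: norm_mult R_def mult_left_le)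
      thus "(complex_of_real R * z, (\<lambda>_. s) z, (\<lambda>_. p) z) \<in> closure Pent"
        using fiber_cl[OF z(1,2)] z(3,4) by simp
    next
      fix z :: complex assume "z \<in> sphere 0 1"
      hence "cmod (complex_of_real R * z) = sqrt (1 - (cmod s)^2/4)" using R0 Rs by (simp add: norm_mult)
      hence "(complex_of_real R * z, (\<lambda>_. s) z, (\<lambda>_. p) z) \<in> K0" using bg by (simp add: K0_def)
      thus "cmod (f (complex_of_real R * z, (\<lambda>_. s) z, (\<lambda>_. p) z)) \<le> B" by (rule B)
    qed
    thus ?thesis using Rp by simp
  qed
qed


lemma CB_bound:
  assumes f: "f \<in> AP" and B: "\<And>q. q \<in> S1 \<Longrightarrow> cmod (f q) \<le> B" and A: "A \<in> CB"
  shows "cmod (f (piP A)) \<le> B"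
proof -
  obtain x1 x2 y1 y2 s1 s2 where sv: "unit2 x1 x2" "unit2 y1 y2" "cmod s1 \<le> 1" "cmod s2 \<le> 1"
    "A = MM x1 x2 y1 y2 s1 s2" using svd[OF A] by blast
  define c where "c = y1*cnj x1 + y2*cnj x2"
  define K where "K = (y1*cnj y1 + y2*cnj y2)*(x1*cnj x1 + x2*cnj x2)"
  have pe: "piP (MM x1 x2 y1 y2 z1 z2) = (z1*y2*cnj x1 - z2*cnj y1*x2, z1*c + z2*cnj c, z1*z2*K)" for z1 z2
    by (simp add: MM_piP c_def K_def mult.assoc)
  have inc: "piP (MM x1 x2 y1 y2 z1 z2) \<in> closure Pent" if "cmod z1 \<le> 1" "cmod z2 \<le> 1" for z1 z2
    using MM_CB[of x1 x2 y1 y2 z1 z2] sv(1,2) that unfolding closure_Pent unit2_def by blast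
  have S: "piP (MM x1 x2 y1 y2 z1 z2) \<in> S1" if "cmod z1 = 1" "cmod z2 = 1" for z1 z2
    using MM_S1 sv(1,2) that unfolding unit2_def by blast
  have step: "cmod (f (piP (MM x1 x2 y1 y2 s1 z2))) \<le> B" if z2: "cmod z2 = 1" for z2
  proof -
    have "cmod (f ((\<lambda>z. z*y2*cnj x1 - z2*cnj y1*x2) s1, (\<lambda>z. z*c + z2*cnj c) s1, (\<lambda>z. z*z2*K) s1)) \<le> B"
    proof (rule disc_bound[OF f, of "\<lambda>z. z*y2*cnj x1 - z2*cnj y1*x2" "\<lambda>z. z*c + z2*cnj c" "\<lambda>z. z*z2*K" B s1])
      show "continuous_on (cball 0 1) (\<lambda>z. ((\<lambda>z. z*y2*cnj x1 - z2*cnj y1*x2) z, (\<lambda>z. z*c + z2*cnj c) z, (\<lambda>z. z*z2*K) z))"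
        by (intro continuous_intros)
      show "(\<lambda>z. z*y2*cnj x1 - z2*cnj y1*x2) holomorphic_on ball 0 1" by (intro holomorphic_intros)
      show "(\<lambda>z. z*c + z2*cnj c) holomorphic_on ball 0 1" by (intro holomorphic_intros)
      show "(\<lambda>z. z*z2*K) holomorphic_on ball 0 1" by (intro holomorphic_intros)
      show "s1 \<in> cball 0 1" using sv(3) by simp
    next
      fix z :: complex assume "z \<in> cball 0 1"
      thus "((\<lambda>z. z*y2*cnj x1 - z2*cnj y1*x2) z, (\<lambda>z. z*c + z2*cnj c) z, (\<lambda>z. z*z2*K) z) \<in> closure Pent"
        using inc[of z z2] z2 pe[of z z2] by simp
    next
      fix z :: complex assume "z \<in> sphere 0 1"
      thus "cmod (f ((\<lambda>z. z*y2*cnj x1 - z2*cnj y1*x2) z, (\<lambda>z. z*c + z2*cnj c) z, (\<lambda>z. z*z2*K) z)) \<le> B"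
        using B[OF S[of z z2]] z2 pe[of z z2] by simp
    qed
    thus ?thesis using pe[of s1 z2] by simp
  qed
  have "cmod (f ((\<lambda>z. s1*y2*cnj x1 - z*cnj y1*x2) s2, (\<lambda>z. s1*c + z*cnj c) s2, (\<lambda>z. s1*z*K) s2)) \<le> B"
  proof (rule disc_bound[OF f, of "\<lambda>z. s1*y2*cnj x1 - z*cnj y1*x2" "\<lambda>z. s1*c + z*cnj c" "\<lambda>z. s1*z*K" B s2])
    show "continuous_on (cball 0 1) (\<lambda>z. ((\<lambda>z. s1*y2*cnj x1 - z*cnj y1*x2) z, (\<lambda>z. s1*c + z*cnj c) z, (\<lambda>z. s1*z*K) z))"
      by (intro continuous_intros)
    show "(\<lambda>z. s1*y2*cnj x1 - z*cnj y1*x2) holomorphic_on ball 0 1" by (intro holomorphic_intros)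
    show "(\<lambda>z. s1*c + z*cnj c) holomorphic_on ball 0 1" by (intro holomorphic_intros)
    show "(\<lambda>z. s1*z*K) holomorphic_on ball 0 1" by (intro holomorphic_intros)
    show "s2 \<in> cball 0 1" using sv(4) by simp
  next
    fix z :: complex assume "z \<in> cball 0 1"
    thus "((\<lambda>z. s1*y2*cnj x1 - z*cnj y1*x2) z, (\<lambda>z. s1*c + z*cnj c) z, (\<lambda>z. s1*z*K) z) \<in> closure Pent"
      using inc[of s1 z] sv(3) pe[of s1 z] by simp
  next
    fix z :: complex assume "z \<in> sphere 0 1"
    thus "cmod (f ((\<lambda>z. s1*y2*cnj x1 - z*cnj y1*x2) z, (\<lambda>z. s1*c + z*cnj c) z, (\<lambda>z. s1*z*K) z)) \<le> B"
      using step[of z] pe[of s1 z] by simp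
  qed
  thus ?thesis using pe[of s1 s2] sv(5) by simp
qed

lemma K0_boundary:
  assumes f: "f \<in> AP" and B: "\<And>k. k \<in> K0 \<Longrightarrow> cmod (f k) \<le> B" and x: "x \<in> closure Pent"
  shows "cmod (f x) \<le> B"
proof -
  obtain A where A: "A \<in> CB" "x = piP A" using x unfolding closure_Pent by auto
  have "cmod (f q) \<le> B" if "q \<in> S1" for q
    using S1_bound[OF f B] that by (cases q) auto
  thus ?thesis using CB_bound[OF f _ A(1)] A(2) by blast
qed


definition CL :: "(c3 \<Rightarrow> complex) \<Rightarrow> bool" where
  "CL L \<longleftrightarrow> (\<forall>c v. L (c3_scale c v) = c * L v)"

definition H3 :: "(c3 \<Rightarrow> complex) \<Rightarrow> c3 \<Rightarrow> bool" where
  "H3 g z \<longleftrightarrow> (\<exists>L. (g has_derivative L) (at z) \<and> CL L)"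

lemma H3_const: "H3 (\<lambda>_. k) z"
  unfolding H3_def CL_def by (intro exI[of _ "\<lambda>_. 0"]) (auto intro: derivative_intros)

lemma H3_fst: "H3 (\<lambda>x. fst x) z"
  unfolding H3_def CL_def
  by (intro exI[of _ "\<lambda>h. fst h"]) (auto intro!: derivative_eq_intros simp: c3_scale_def)

lemma H3_snd1: "H3 (\<lambda>x. fst (snd x)) z"
  unfolding H3_def CL_def
  by (intro exI[of _ "\<lambda>h. fst (snd h)"]) (auto intro!: derivative_eq_intros simp: c3_scale_def)

lemma H3_snd2: "H3 (\<lambda>x. snd (snd x)) z"
  unfolding H3_def CL_def
  by (intro exI[of _ "\<lambda>h. snd (snd h)"]) (auto intro!: derivative_eq_intros simp: c3_scale_def)

lemma H3_add: "H3 f z \<Longrightarrow> H3 g z \<Longrightarrow> H3 (\<lambda>x. f x + g x) z"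
  unfolding H3_def CL_def
  by (elim exE conjE, rule exI, rule conjI, erule (1) has_derivative_add) (simp add: algebra_simps)

lemma H3_mult: "H3 f z \<Longrightarrow> H3 g z \<Longrightarrow> H3 (\<lambda>x. f x * g x) z"
  unfolding H3_def CL_def
  by (elim exE conjE, rule exI, rule conjI, erule (1) has_derivative_mult) (simp add: algebra_simps)

lemma H3_inverse: assumes "H3 f z" "f z \<noteq> 0" shows "H3 (\<lambda>x. inverse (f x)) z"
proof -
  obtain L where L: "(f has_derivative L) (at z)" "\<And>c v. L (c3_scale c v) = c * L v"
    using assms(1) unfolding H3_def CL_def by blast
  have "((\<lambda>x. inverse (f x)) has_derivative (\<lambda>h. - (inverse (f z) * L h * inverse (f z)))) (at z)"
    by (rule Deriv.has_derivative_inverse[OF assms(2) L(1)])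
  moreover have "CL (\<lambda>h. - (inverse (f z) * L h * inverse (f z)))"
    unfolding CL_def using L(2) by (simp add: algebra_simps)
  ultimately show ?thesis unfolding H3_def by blast
qed

lemma H3_divide: "H3 f z \<Longrightarrow> H3 g z \<Longrightarrow> g z \<noteq> 0 \<Longrightarrow> H3 (\<lambda>x. f x / g x) z"
  unfolding divide_inverse by (intro H3_mult H3_inverse)

lemma holo3_from_H3: "(\<And>z. z \<in> U \<Longrightarrow> H3 g z) \<Longrightarrow> holo3_on g U"
  unfolding holo3_on_def H3_def CL_def by blast


lemma para: "(cmod (w1+w2))^2 + (cmod (w1-w2))^2 = 2*(cmod w1)^2 + 2*(cmod w2)^2"
  apply (rule of_real_inj_eq)
  unfolding of_real_mult of_real_add of_real_power cmod_sq
  by (simp add: algebra_simps)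

lemma avg2: assumes "cmod w1 \<le> 2" "cmod w2 \<le> 2" "cmod (w1 + w2) \<ge> 4" shows "w1 = w2"
proof -
  have "(cmod w1)^2 \<le> 4" "(cmod w2)^2 \<le> 4"
    using power_mono[OF assms(1) norm_ge_zero, of 2] power_mono[OF assms(2) norm_ge_zero, of 2] by simp_all
  moreover have "(cmod (w1 + w2))^2 \<ge> 16" using assms(3) power_mono[of 4 "cmod (w1+w2)" 2] by simp
  ultimately have "(cmod (w1-w2))^2 \<le> 0" using para[of w1 w2] by linarith
  thus ?thesis by simp
qed

lemma one_plus: assumes "cmod z \<le> 1" "cmod (1 + z) \<ge> 2" shows "z = 1"
proof -
  have "(cmod z)^2 \<le> 1" using assms(1) by (simp add: power_le_one)
  moreover have "(cmod (1 + z))^2 \<ge> 4" using assms(2) power_mono[of 2 "cmod (1+z)" 2] by simp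
  moreover have "(cmod (1+z))^2 + (cmod (1-z))^2 = 2 + 2*(cmod z)^2" using para[of 1 z] by simp
  ultimately have "(cmod (1-z))^2 \<le> 0" by linarith
  thus ?thesis by simp
qed

lemma peak_from_h:
  assumes ucl: "(a0,s0,p0) \<in> closure Pent" and p0: "cmod p0 = 1"
    and hc: "continuous_on (closure Pent) h" and hH: "\<And>z. z \<in> Pent \<Longrightarrow> H3 h z"
    and hu: "h (a0,s0,p0) = 2" and hb: "\<And>x. x \<in> closure Pent \<Longrightarrow> cmod (h x) \<le> 2"
    and h2: "\<And>a s p. (a,s,p) \<in> closure Pent \<Longrightarrow> h (a,s,p) = 2 \<Longrightarrow> a = a0 \<and> s = s0"
  shows "peak_point (a0,s0,p0)"
proof -
  define g where "g x = (h x + 1 + cnj p0 * snd (snd x)) / 4" for x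
  have gAP: "g \<in> AP" unfolding AP_def
  proof safe
    show "continuous_on (closure Pent) g" unfolding g_def by (intro continuous_intros hc) auto
    show "holo3_on g Pent" unfolding g_def
      by (intro holo3_from_H3 H3_divide H3_add H3_mult H3_const H3_snd2 hH) simp_all
  qed
  have P0: "cnj p0 * p0 = 1" using unimod_c[OF p0] by (simp add: mult.commute)
  have gu: "g (a0,s0,p0) = 1" unfolding g_def using hu P0 by simp
  have "cmod (g x) < 1" if x: "x \<in> closure Pent - {(a0,s0,p0)}" for x
  proof (rule ccontr)
    assume "\<not> cmod (g x) < 1"
    hence ge: "cmod (h x + (1 + cnj p0 * snd (snd x))) \<ge> 4" unfolding g_def by (simp add: add.assoc)
    obtain a s p where xe: "x = (a,s,p)" by (metis prod_cases3)
    have xc: "(a,s,p) \<in> closure Pent" using x xe by simp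
    have pb: "cmod p \<le> 1" using cl_bounds(2)[OF xc] .
    have cp: "cmod (cnj p0 * p) \<le> 1" using pb p0 by (simp add: norm_mult)
    have w2: "cmod (1 + cnj p0 * p) \<le> 2" using norm_triangle_ineq[of 1 "cnj p0 * p"] cp by simp
    have eq: "h x = 1 + cnj p0 * p" using avg2[OF hb[OF xc[folded xe]] w2] ge xe by simp
    have e2: "h x + (1 + cnj p0 * snd (snd x)) = 2 * (1 + cnj p0 * p)" using eq xe by simp
    have "cmod (2 * (1 + cnj p0 * p)) \<ge> 4" using ge unfolding e2 .
    hence "2 * cmod (1 + cnj p0 * p) \<ge> 4" by (simp only: norm_mult norm_numeral)
    hence "cmod (1 + cnj p0 * p) \<ge> 2" by linarith
    hence z1: "cnj p0 * p = 1" by (rule one_plus[OF cp])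
    have "p = (p0 * cnj p0) * p" using unimod_c[OF p0] by simp
    also have "\<dots> = p0 * (cnj p0 * p)" by (simp only: mult.assoc)
    also have "\<dots> = p0" using z1 by simp
    finally have "p = p0" .
    moreover have "h (a,s,p) = 2" using eq z1 xe by simp
    ultimately have "a = a0 \<and> s = s0 \<and> p = p0" using h2[OF xc] by blast
    thus False using x xe by simp
  qed
  hence "\<forall>x\<in>closure Pent - {(a0,s0,p0)}. cmod (g x) < 1" by blast
  hence "g (a0,s0,p0) = 1 \<and> (\<forall>x\<in>closure Pent - {(a0,s0,p0)}. cmod (g x) < 1)" using gu by (rule conjI[rotated])
  hence ex: "\<exists>g\<in>AP. g (a0,s0,p0) = 1 \<and> (\<forall>x\<in>closure Pent - {(a0,s0,p0)}. cmod (g x) < 1)"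
    using gAP by (rule bexI)
  show ?thesis unfolding peak_point_def by (rule conjI[OF ucl ex])
qed


lemma H3_diff: "H3 f z \<Longrightarrow> H3 g z \<Longrightarrow> H3 (\<lambda>x. f x - g x) z"
  unfolding H3_def CL_def
  by (elim exE conjE, rule exI, rule conjI, erule (1) has_derivative_diff) (simp add: algebra_simps)

lemma D_id: "(cmod (1 - cnj s0 * s / 4))^2 = (1 - (cmod s0)^2/4) * (1 - (cmod s)^2/4) + (cmod (s - s0))^2/4"
  apply (rule of_real_inj_eq)
  unfolding of_real_mult of_real_add of_real_diff of_real_power of_real_divide cmod_sq
  by (simp add: field_simps)

lemma peak_s2: assumes u: "(a0,s0,p0) \<in> K0" and s2: "cmod s0 = 2" shows "peak_point (a0,s0,p0)"
proof -
  have bg: "cmod s0 \<le> 2" "cmod p0 = 1" using u bG_char by (auto simp: K0_def)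
  have a0: "a0 = 0" using u s2 by (auto simp: K0_def)
  have S0: "cnj s0 * s0 = 4"
  proof -
    have "s0 * cnj s0 = (complex_of_real (cmod s0))^2" by (simp add: cmod_sq)
    thus ?thesis using s2 by (simp add: mult.commute)
  qed
  show ?thesis
  proof (rule peak_from_h[OF K0_cl[THEN subsetD, OF u] bg(2), where h = "\<lambda>x. 1 + cnj s0 * fst (snd x) / 4"])
    show "continuous_on (closure Pent) (\<lambda>x. 1 + cnj s0 * fst (snd x) / 4)" by (intro continuous_intros) auto
    show "H3 (\<lambda>x. 1 + cnj s0 * fst (snd x) / 4) z" for z
      by (intro H3_add H3_const H3_divide H3_mult H3_snd1) simp
    show "1 + cnj s0 * fst (snd (a0, s0, p0)) / 4 = 2" using S0 by simp
  next
    fix x assume x: "x \<in> closure Pent"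
    obtain a s p where xe: "x = (a,s,p)" by (metis prod_cases3)
    have "cmod s \<le> 2" using cl_bounds(3) x xe by simp
    hence "cmod (cnj s0 * s / 4) \<le> 1" using s2 by (simp add: norm_mult norm_divide)
    hence "cmod (1 + cnj s0 * s / 4) \<le> 2" using norm_triangle_ineq[of 1 "cnj s0 * s / 4"] by simp
    thus "cmod (1 + cnj s0 * fst (snd x) / 4) \<le> 2" using xe by simp
  next
    fix a s p assume x: "(a,s,p) \<in> closure Pent" and h: "1 + cnj s0 * fst (snd (a,s,p)) / 4 = 2"
    hence "cnj s0 * s = 4" by (simp add: field_simps)
    hence "s0 * (cnj s0 * s) = s0 * 4" by simp
    hence "(cnj s0 * s0) * s = s0 * 4" by (simp only: mult.assoc mult.left_commute)
    hence "4 * s = s0 * 4" by (simp only: S0)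
    hence ss: "s = s0" by simp
    have "(cmod a)^2 + (cmod s)^2/4 \<le> 1" using cl_bounds(1)[OF x] .
    hence "(cmod a)^2 \<le> 0" using ss s2 by simp
    hence "a = 0" by simp
    thus "a = a0 \<and> s = s0" using a0 ss by simp
  qed
qed


lemma peak_slt2: assumes u: "(a0,s0,p0) \<in> K0" and s2: "cmod s0 < 2" shows "peak_point (a0,s0,p0)"
proof -
  have bg: "cmod s0 \<le> 2" "cmod p0 = 1" using u bG_char by (auto simp: K0_def)
  have ca0: "cmod a0 = sqrt (1 - (cmod s0)^2/4)" using u by (auto simp: K0_def)
  have pos: "1 - (cmod s0)^2/4 > 0"
  proof -
    have "(cmod s0)^2 < 2^2" using s2 by (intro power_strict_mono) auto
    thus ?thesis by simp
  qed
  have A0: "(cmod a0)^2 = 1 - (cmod s0)^2/4" using ca0 pos by simp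
  have a0nz: "a0 \<noteq> 0" using A0 pos by auto
  have A0c: "cnj a0 * a0 = complex_of_real (1 - (cmod s0)^2/4)"
    using A0 by (metis cmod_sq mult.commute of_real_power)
  define D where "D x = 1 - cnj s0 * fst (snd x) / 4" for x :: c3
  have Dnz: "D x \<noteq> 0" if "x \<in> closure Pent" for x
  proof -
    have "cmod (fst (snd x)) \<le> 2" using cl_bounds(3)[of "fst x" "fst (snd x)" "snd (snd x)"] that by simp
    hence "cmod (cnj s0 * fst (snd x) / 4) \<le> cmod s0 * 2 / 4"
      by (simp add: norm_mult norm_divide mult_left_mono)
    also have "\<dots> < 1" using s2 by simp
    finally show ?thesis unfolding D_def by (metis norm_one right_minus_eq order_less_irrefl)
  qed
  show ?thesis
  proof (rule peak_from_h[OF K0_cl[THEN subsetD, OF u] bg(2), where h = "\<lambda>x. 2 * (cnj a0 * fst x) / D x"])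
    show "continuous_on (closure Pent) (\<lambda>x. 2 * (cnj a0 * fst x) / D x)"
      unfolding D_def using Dnz unfolding D_def by (intro continuous_intros) auto
    show "H3 (\<lambda>x. 2 * (cnj a0 * fst x) / D x) z" if "z \<in> Pent" for z
      unfolding D_def using Dnz[of z] that closure_subset unfolding D_def
      by (intro H3_add H3_const H3_divide H3_mult H3_snd1 H3_fst H3_diff) auto
    show "2 * (cnj a0 * fst (a0, s0, p0)) / D (a0, s0, p0) = 2"
    proof -
      have "D (a0,s0,p0) = complex_of_real (1 - (cmod s0)^2/4)"
        unfolding D_def by (simp add: cmod_sq mult.commute)
      hence "D (a0,s0,p0) = cnj a0 * a0" using A0c by simp
      moreover have "cnj a0 * a0 \<noteq> 0" using a0nz by simp
      ultimately show ?thesis by simp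
    qed
  next
    fix x assume x: "x \<in> closure Pent"
    obtain a s p where xe: "x = (a,s,p)" by (metis prod_cases3)
    have xc: "(a,s,p) \<in> closure Pent" using x xe by simp
    have ab: "(cmod a)^2 \<le> 1 - (cmod s)^2/4" using cl_bounds(1)[OF xc] by simp
    have "((cmod a0) * (cmod a))^2 \<le> (1 - (cmod s0)^2/4) * (1 - (cmod s)^2/4)"
      unfolding power_mult_distrib A0 using ab pos by (intro mult_left_mono) auto
    also have "\<dots> \<le> (cmod (D x))^2" unfolding D_def xe using D_id[of s0 s] by simp
    finally have "cmod a0 * cmod a \<le> cmod (D x)" by (rule power2_le_imp_le) simp
    hence "cmod (cnj a0 * a) / cmod (D x) \<le> 1" using Dnz[OF x] by (simp add: norm_mult divide_le_eq)
    thus "cmod (2 * (cnj a0 * fst x) / D x) \<le> 2" using xe by (simp add: norm_mult norm_divide)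
  next
    fix a s p assume xc: "(a,s,p) \<in> closure Pent" and h: "2 * (cnj a0 * fst (a,s,p)) / D (a,s,p) = 2"
    have Dn: "D (a,s,p) \<noteq> 0" using Dnz[OF xc] .
    hence e: "cnj a0 * a = D (a,s,p)" using h by (simp add: field_simps)
    have ab: "(cmod a)^2 \<le> 1 - (cmod s)^2/4" using cl_bounds(1)[OF xc] by simp
    have "(cmod (D (a,s,p)))^2 = (cmod a0)^2 * (cmod a)^2"
      unfolding e[symmetric] by (simp add: norm_mult power_mult_distrib)
    also have "\<dots> \<le> (1 - (cmod s0)^2/4) * (1 - (cmod s)^2/4)"
      unfolding A0 using ab pos by (intro mult_left_mono) auto
    finally have "(cmod (s - s0))^2/4 \<le> 0" using D_id[of s0 s] unfolding D_def by simp
    hence ss: "s = s0" by simp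
    have "D (a,s,p) = cnj a0 * a0" using A0c ss unfolding D_def by (simp add: cmod_sq mult.commute)
    hence "cnj a0 * a = cnj a0 * a0" using e by simp
    hence "a = a0" using a0nz by simp
    thus "a = a0 \<and> s = s0" using ss by simp
  qed
qed

lemma K0_peak: "u \<in> K0 \<Longrightarrow> peak_point u"
proof -
  assume u: "u \<in> K0"
  obtain a0 s0 p0 where ue: "u = (a0,s0,p0)" by (metis prod_cases3)
  have "cmod s0 \<le> 2" using u ue bG_char by (auto simp: K0_def)
  thus ?thesis using peak_s2 peak_slt2 u ue by (cases "cmod s0 = 2") auto
qed


lemma K0_char: "K0 = {(a, s, p). cmod s \<le> 2 \<and> cmod p = 1 \<and> s = cnj s * p \<and>
                                    cmod a = sqrt (1 - (cmod s)\<^sup>2 / 4)}"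
  unfolding K0_def using bG_char by blast

lemma K0_compact: "compact K0"
proof -
  have e: "K0 = {x. cmod (fst (snd x)) \<le> 2 \<and> cmod (snd (snd x)) = 1 \<and>
                fst (snd x) = cnj (fst (snd x)) * snd (snd x) \<and>
                cmod (fst x) = sqrt (1 - (cmod (fst (snd x)))\<^sup>2 / 4)}"
    unfolding K0_char by auto
  have "closed K0" unfolding e
    by (intro closed_Collect_conj closed_Collect_le closed_Collect_eq continuous_intros) auto
  moreover have "bounded K0" using K0_cl compact_cl bounded_subset compact_imp_bounded by blast
  ultimately show ?thesis by (simp add: compact_eq_bounded_closed)
qed

lemma K0_ne: "(0,2,1) \<in> K0"
proof -
  have "(2::complex, 1::complex) \<in> bGamma" unfolding bGamma_def
    by (rule CollectI, rule exI[of _ 1], rule exI[of _ 1]) simp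
  thus ?thesis by (simp add: K0_def)
qed

lemma K0_cb: "closed_boundary K0"
  unfolding closed_boundary_def
proof (intro conjI ballI)
  show "closed K0" using K0_compact compact_imp_closed by blast
  show "K0 \<subseteq> closure Pent" by (rule K0_cl)
  fix f assume f: "f \<in> AP"
  have "continuous_on K0 (\<lambda>x. cmod (f x))"
    using f K0_cl unfolding AP_def by (intro continuous_intros) (auto intro: continuous_on_subset)
  then obtain x where x: "x \<in> K0" "\<And>y. y \<in> K0 \<Longrightarrow> cmod (f y) \<le> cmod (f x)"
    using continuous_attains_sup[OF K0_compact _, of "\<lambda>x. cmod (f x)"] K0_ne by blast
  have "\<forall>y\<in>closure Pent. cmod (f y) \<le> cmod (f x)"
    using K0_boundary[OF f x(2)] by blast
  thus "\<exists>x\<in>K0. \<forall>y\<in>closure Pent. cmod (f y) \<le> cmod (f x)" using x(1) by blast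
qed

lemma peak_in_cb: assumes "closed_boundary C" "peak_point u" shows "u \<in> C"
proof -
  obtain g where g: "g \<in> AP" "g u = 1" "\<forall>x\<in>closure Pent - {u}. cmod (g x) < 1" and u: "u \<in> closure Pent"
    using assms(2) unfolding peak_point_def by blast
  obtain x where x: "x \<in> C" "\<forall>y\<in>closure Pent. cmod (g y) \<le> cmod (g x)"
    using assms(1) g(1) unfolding closed_boundary_def by blast
  have xc: "x \<in> closure Pent" using x(1) assms(1) unfolding closed_boundary_def by blast
  have "1 \<le> cmod (g x)" using x(2) u g(2) by force
  hence "x = u" using g(3) xc by force
  thus ?thesis using x(1) by simp
qed

lemma K0_min: "closed_boundary C \<Longrightarrow> K0 \<subseteq> C"
  using peak_in_cb K0_peak by blast

lemma db_K0: "distinguished_boundary = K0"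
  unfolding distinguished_boundary_def
proof (rule the_equality)
  show "closed_boundary K0 \<and> (\<forall>C'. closed_boundary C' \<longrightarrow> K0 \<subseteq> C')" using K0_cb K0_min by blast
  fix C assume "closed_boundary C \<and> (\<forall>C'. closed_boundary C' \<longrightarrow> C \<subseteq> C')"
  thus "C = K0" using K0_cb K0_min by blast
qed

theorem theorem8p4:
  shows "(\<forall>x::c3. (x \<in> K0 \<longleftrightarrow> peak_point x) \<and> (peak_point x \<longleftrightarrow> x \<in> distinguished_boundary))
     \<and> distinguished_boundary = {(a, s, p). (s, p) \<in> bGamma \<and> cmod a = sqrt (1 - (cmod s)\<^sup>2 / 4)}
     \<and> distinguished_boundary = {(a, s, p). cmod s \<le> 2 \<and> cmod p = 1 \<and> s = cnj s * p \<and>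
                                    cmod a = sqrt (1 - (cmod s)\<^sup>2 / 4)}"
proof -
  have pk: "x \<in> K0 \<longleftrightarrow> peak_point x" for x using K0_peak peak_in_cb[OF K0_cb] by blast
  show ?thesis using pk db_K0 K0_char unfolding K0_def[symmetric] by simp
qed


end
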